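(* Let $\mathcal{G}$ be the affine plane of order $3$, let $R$ be a commutative ring with $2=0$, let $A=M_R(\mathcal{G},1)$ and $A'=A/\operatorname{Ann}(A)$ (an $8$-dimensional algebra). For each of the $12$ lines $\ell$ of $\mathcal{G}$, let $A'^\ell_0$ and $A'^\ell_1$ be the eigenspaces of $\operatorname{ad}_\ell$ on $A'$ for the eigenvalues $0$ and $1$. Then for each line $\ell$, $A'=A'^\ell_0\oplus A'^\ell_1$ and \[ A'^\ell_0A'^\ell_0\subseteq A'^\ell_0,\quad A'^\ell_0A'^\ell_1\subseteq A'^\ell_1,\quad A'^\ell_1A'^\ell_1\subseteq A'^\ell_0, \] i.e. $A'$ is a decomposition algebra with fusion law $0*0=\{0\}$, $0*1=1*0=\{1\}$, $1*1=\{0\}$.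
   Context: The affine plane of order $3$ is the partial linear space of the $9$ points and $12$ lines of the affine plane over $\mathbb{F}_3$ (the Fischer space of $3^2:2$); for distinct points $p,q$ (all distinct pairs are collinear, written $p\sim q$), $p\wedge q$ is the third point of their line. The nilpotent Matsuo algebra $A=M_R(\mathcal{G},1)$ is the free $R$-module with basis the points and commutative bilinear product $p\cdot q=0$ if $p=q$, and $p\cdot q=p+q+p\wedge q$ if $p\sim q$. $\operatorname{Ann}(A)=\{v\in A: vw=0\ \forall w\in A\}$ and $A'=A/\operatorname{Ann}(A)$ with induced product. For a line $\ell$ we also write $\ell$ for the sum of its three points, and $\operatorname{ad}_\ell(v)=\ell v$ (also on $A'$); the eigenspace for $\lambda$ is $\{v:\ell v=\lambda v\}$. *)

theory Defs
  imports Main "HOL-Library.Numeral_Type"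
begin

text \<open>Points of the affine plane of order 3: the vectors of F_3^2, modelled by the
  finite type 3 \<times> 3 (the numeral type 3 is the ring Z/3Z).  Any two distinct points
  are collinear, and the third point of the line through p and q is -(p+q).\<close>

type_synonym point = "3 \<times> 3"

definition wedge :: "point \<Rightarrow> point \<Rightarrow> point" where
  "wedge p q = (- (fst p + fst q), - (snd p + snd q))"

definition lines :: "point set set" where
  "lines = {{p, q, wedge p q} | p q. p \<noteq> q}"

text \<open>The nilpotent Matsuo algebra M_R(G,1): elements are coefficient functions
  point \<Rightarrow> R (free R-module on the 9 points); product extended bilinearly from
  p\<cdot>p = 0 and p\<cdot>q = p + q + p\<wedge>q for p \<noteq> q.\<close>

definition basis_prod :: "point \<Rightarrow> point \<Rightarrow> point \<Rightarrow> 'r::comm_ring_1" where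
  "basis_prod p q = (\<lambda>x. if p \<noteq> q \<and> (x = p \<or> x = q \<or> x = wedge p q) then 1 else 0)"

definition mprod :: "(point \<Rightarrow> 'r::comm_ring_1) \<Rightarrow> (point \<Rightarrow> 'r) \<Rightarrow> (point \<Rightarrow> 'r)" where
  "mprod v w = (\<lambda>x. \<Sum>p\<in>UNIV. \<Sum>q\<in>UNIV. v p * w q * basis_prod p q x)"

definition Ann :: "(point \<Rightarrow> 'r::comm_ring_1) set" where
  "Ann = {v. \<forall>w x. mprod v w x = 0}"

text \<open>A line, viewed as the sum of its three points.\<close>
definition line_vec :: "point set \<Rightarrow> point \<Rightarrow> 'r::comm_ring_1" where
  "line_vec l = (\<lambda>x. if x \<in> l then 1 else 0)"

text \<open>We work with representatives: the class of v in A' lies in the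
  \<lambda>-eigenspace of ad_l on A' iff l v - \<lambda> v \<in> Ann(A).  qeig l lam is the preimage in A of
  the eigenspace A'^l_lam.\<close>
definition qeig :: "point set \<Rightarrow> 'r::comm_ring_1 \<Rightarrow> (point \<Rightarrow> 'r) set" where
  "qeig l lam = {v. (\<lambda>x. mprod (line_vec l) v x - lam * v x) \<in> Ann}"

end

theory Submission
  imports Defs
begin


lemma wedge_comm: "wedge p q = wedge q p"
  by (simp add: wedge_def add.commute)

lemma bp_comm: "basis_prod p q = basis_prod q p"
  by (auto simp: basis_prod_def wedge_comm fun_eq_iff)

lemma mprod_comm: "mprod v w = mprod w v"
  unfolding mprod_def
  by (rule ext, subst sum.swap) (simp add: bp_comm mult.commute mult.left_commute)

lemma mprod_diff_left: "mprod (\<lambda>x. a x - b x) w y = mprod a w y - mprod b w y"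
  unfolding mprod_def by (simp add: algebra_simps sum_subtractf)

lemma mprod_diff_right: "mprod v (\<lambda>x. a x - b x) y = mprod v a y - mprod v b y"
  unfolding mprod_def by (simp add: algebra_simps sum_subtractf)

lemma mprod_add_left: "mprod (\<lambda>x. a x + b x) w y = mprod a w y + mprod b w y"
  unfolding mprod_def by (simp add: algebra_simps sum.distrib)

lemma mprod_add_right: "mprod v (\<lambda>x. a x + b x) y = mprod v a y + mprod v b y"
  unfolding mprod_def by (simp add: algebra_simps sum.distrib)

lemma Ann_left: "v \<in> Ann \<Longrightarrow> mprod v w y = 0"
  unfolding Ann_def by blast

lemma Ann_right: "v \<in> Ann \<Longrightarrow> mprod w v y = 0"
  using Ann_left[of v w y] mprod_comm[of w v] by simp

lemma Ann_diff: "a \<in> Ann \<Longrightarrow> b \<in> Ann \<Longrightarrow> (\<lambda>x. a x - b x) \<in> Ann"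
  by (simp add: Ann_def mprod_diff_left)

lemma Ann_add: "a \<in> Ann \<Longrightarrow> b \<in> Ann \<Longrightarrow> (\<lambda>x. a x + b x) \<in> Ann"
  by (simp add: Ann_def mprod_add_left)

lemma Ann_zero: "(\<lambda>x. 0) \<in> Ann"
  by (simp add: Ann_def mprod_def)

lemma Ann_cong: "f \<in> Ann \<Longrightarrow> (\<And>x. g x = f x) \<Longrightarrow> g \<in> Ann"
proof -
  assume "f \<in> Ann" "\<And>x. g x = f x"
  then have "g = f" by (simp add: fun_eq_iff)
  with \<open>f \<in> Ann\<close> show ?thesis by simp
qed

lemma Ann_neg: "a \<in> Ann \<Longrightarrow> (\<lambda>x. - a x) \<in> Ann"
  using Ann_diff[OF Ann_zero, of a] by simp

lemma abstract_main:
  fixes l :: "point set" and dummy :: "'r::comm_ring_1"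
  assumes char2: "(2::'r) = 0"
    and I: "\<And>v::point\<Rightarrow>'r. (\<lambda>x. mprod (line_vec l) (mprod (line_vec l) v) x - mprod (line_vec l) v x) \<in> Ann"
    and D: "\<And>v w::point\<Rightarrow>'r. (\<lambda>x. mprod (line_vec l) (mprod v w) x - mprod v (mprod (line_vec l) w) x
               - mprod (mprod (line_vec l) v) w x) \<in> Ann"
  shows "(\<forall>v :: point \<Rightarrow> 'r. \<exists>v0 v1. v0 \<in> qeig l 0 \<and> v1 \<in> qeig l 1 \<and> (\<lambda>x. v x - (v0 x + v1 x)) \<in> Ann)
       \<and> (\<forall>v :: point \<Rightarrow> 'r. v \<in> qeig l 0 \<and> v \<in> qeig l 1 \<longrightarrow> v \<in> Ann)
       \<and> (\<forall>v w :: point \<Rightarrow> 'r. v \<in> qeig l 0 \<and> w \<in> qeig l 0 \<longrightarrow> mprod v w \<in> qeig l 0)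
       \<and> (\<forall>v w :: point \<Rightarrow> 'r. v \<in> qeig l 0 \<and> w \<in> qeig l 1 \<longrightarrow> mprod v w \<in> qeig l 1)
       \<and> (\<forall>v w :: point \<Rightarrow> 'r. v \<in> qeig l 1 \<and> w \<in> qeig l 1 \<longrightarrow> mprod v w \<in> qeig l 0)"
proof -
  define L where "L = (\<lambda>u::point\<Rightarrow>'r. mprod (line_vec l) u)"
  have q0: "v \<in> qeig l 0 \<longleftrightarrow> L v \<in> Ann" for v :: "point\<Rightarrow>'r"
    by (simp add: qeig_def L_def)
  have q1: "v \<in> qeig l 1 \<longleftrightarrow> (\<lambda>x. L v x - v x) \<in> Ann" for v :: "point\<Rightarrow>'r"
    by (simp add: qeig_def L_def)
  have I': "(\<lambda>x. L (L v) x - L v x) \<in> Ann" for v using I by (simp add: L_def)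
  have D': "(\<lambda>x. L (mprod v w) x - mprod v (L w) x - mprod (L v) w x) \<in> Ann" for v w
    using D by (simp add: L_def)
  have Ldiff: "L (\<lambda>x. a x - b x) y = L a y - L b y" for a b y
    by (simp add: L_def mprod_diff_right)
  have P1: "\<exists>v0 v1. v0 \<in> qeig l 0 \<and> v1 \<in> qeig l 1 \<and> (\<lambda>x. v x - (v0 x + v1 x)) \<in> Ann" for v :: "point \<Rightarrow> 'r"
  proof (intro exI conjI)
    show "(\<lambda>x. v x - L v x) \<in> qeig l 0"
      unfolding q0 by (rule Ann_cong[OF Ann_neg[OF I'[of v]]]) (simp add: Ldiff)
    show "L v \<in> qeig l 1" unfolding q1 by (rule I')
    show "(\<lambda>x. v x - ((v x - L v x) + L v x)) \<in> Ann" by (rule Ann_cong[OF Ann_zero]) simp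
  qed
  have P2: "v \<in> Ann" if "v \<in> qeig l 0" "v \<in> qeig l 1" for v :: "point \<Rightarrow> 'r"
  proof -
    have "(\<lambda>x. L v x - (L v x - v x)) \<in> Ann"
      using that unfolding q0 q1 by (rule Ann_diff)
    then show ?thesis by (rule Ann_cong) simp
  qed
  have split: "L (mprod v w) x = (L (mprod v w) x - mprod v (L w) x - mprod (L v) w x)
      + mprod v (\<lambda>y. L w y - w y) x + mprod (\<lambda>y. L v y - v y) w x + 2 * mprod v w x" for v w :: "point \<Rightarrow> 'r" and x
    by (simp add: mprod_diff_left mprod_diff_right algebra_simps)
  have P3: "mprod v w \<in> qeig l 0" if "v \<in> qeig l 0" "w \<in> qeig l 0" for v w :: "point \<Rightarrow> 'r"
  proof -
    have "L (mprod v w) x = (L (mprod v w) x - mprod v (L w) x - mprod (L v) w x)" for x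
      using that unfolding q0 by (simp add: Ann_left Ann_right)
    then show ?thesis unfolding q0 by (intro Ann_cong[OF D'[of v w]])
  qed
  have P4: "mprod v w \<in> qeig l 1" if "v \<in> qeig l 0" "w \<in> qeig l 1" for v w :: "point \<Rightarrow> 'r"
  proof -
    have "L (mprod v w) x - mprod v w x = (L (mprod v w) x - mprod v (L w) x - mprod (L v) w x)" for x
    proof -
      have "mprod v (\<lambda>y. L w y - w y) x = 0" using that(2) unfolding q1 by (rule Ann_right)
      moreover have "mprod (L v) w x = 0" using that(1) unfolding q0 by (rule Ann_left)
      ultimately show ?thesis by (simp add: mprod_diff_right)
    qed
    then show ?thesis unfolding q1 by (intro Ann_cong[OF D'[of v w]])
  qed
  have P5: "mprod v w \<in> qeig l 0" if "v \<in> qeig l 1" "w \<in> qeig l 1" for v w :: "point \<Rightarrow> 'r"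
  proof -
    have "L (mprod v w) x = (L (mprod v w) x - mprod v (L w) x - mprod (L v) w x)" for x
      using that split[of v w x] char2 unfolding q1 by (simp add: Ann_left Ann_right)
    then show ?thesis unfolding q0 by (intro Ann_cong[OF D'[of v w]])
  qed
  show ?thesis
    apply (intro conjI allI impI)
        apply (rule P1)
       apply (erule conjE, erule (1) P2)
      apply (erule conjE, erule (1) P3)
     apply (erule conjE, erule (1) P4)
    apply (erule conjE, erule (1) P5)
    done
qed



definition bpi :: "point \<Rightarrow> point \<Rightarrow> point \<Rightarrow> int" where
  "bpi p q x = (if p \<noteq> q \<and> (x = p \<or> x = q \<or> x = wedge p q) then 1 else 0)"
definition li :: "point set \<Rightarrow> point \<Rightarrow> int" where
  "li l a = (if a \<in> l then 1 else 0)"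
definition Ltp :: "point set \<Rightarrow> point \<Rightarrow> point \<Rightarrow> int" where
  "Ltp l y x = (\<Sum>a\<in>UNIV. li l a * bpi a y x)"
definition Kk :: "point set \<Rightarrow> point \<Rightarrow> point \<Rightarrow> point \<Rightarrow> int" where
  "Kk l p q x = (\<Sum>y\<in>UNIV. bpi p q y * Ltp l y x - Ltp l q y * bpi p y x - Ltp l p y * bpi y q x)"
definition Jk :: "point set \<Rightarrow> point \<Rightarrow> point \<Rightarrow> int" where
  "Jk l p x = (\<Sum>y\<in>UNIV. Ltp l p y * Ltp l y x) - Ltp l p x"

lemma bp_int: "(basis_prod p q x :: 'r::comm_ring_1) = of_int (bpi p q x)"
  by (simp add: basis_prod_def bpi_def)

lemma lv_int: "(line_vec l a :: 'r::comm_ring_1) = of_int (li l a)"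
  by (simp add: line_vec_def li_def)

lemma mprod_int: "mprod v w x = (\<Sum>p\<in>UNIV. \<Sum>q\<in>UNIV. v p * w q * of_int (bpi p q x))"
  by (simp add: mprod_def bp_int)

lemma L_int: "mprod (line_vec l) f x = (\<Sum>y\<in>UNIV. f y * of_int (Ltp l y x))"
proof -
  have "mprod (line_vec l) f x = (\<Sum>a\<in>UNIV. \<Sum>y\<in>UNIV. f y * (of_int (li l a) * of_int (bpi a y x)))"
    by (simp add: mprod_int lv_int mult_ac)
  also have "\<dots> = (\<Sum>y\<in>UNIV. \<Sum>a\<in>UNIV. f y * (of_int (li l a) * of_int (bpi a y x)))"
    by (rule sum.swap)
  also have "\<dots> = (\<Sum>y\<in>UNIV. f y * of_int (Ltp l y x))"
    by (simp add: Ltp_def sum_distrib_left)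
  finally show ?thesis .
qed

lemma LL_int: "mprod (line_vec l) (mprod (line_vec l) v) x
   = (\<Sum>p\<in>UNIV. v p * of_int (\<Sum>y\<in>UNIV. Ltp l p y * Ltp l y x))"
proof -
  have "mprod (line_vec l) (mprod (line_vec l) v) x
      = (\<Sum>y\<in>UNIV. \<Sum>p\<in>UNIV. v p * (of_int (Ltp l p y) * of_int (Ltp l y x)))"
    unfolding L_int sum_distrib_right sum_distrib_left of_int_sum of_int_mult by (simp add: mult_ac)
  also have "\<dots> = (\<Sum>p\<in>UNIV. \<Sum>y\<in>UNIV. v p * (of_int (Ltp l p y) * of_int (Ltp l y x)))"
    by (rule sum.swap)
  also have "\<dots> = (\<Sum>p\<in>UNIV. v p * of_int (\<Sum>y\<in>UNIV. Ltp l p y * Ltp l y x))"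
    unfolding sum_distrib_left of_int_sum of_int_mult by (simp add: mult_ac)
  finally show ?thesis .
qed

lemma J_int: "mprod (line_vec l) (mprod (line_vec l) v) x - mprod (line_vec l) v x
   = (\<Sum>p\<in>UNIV. v p * of_int (Jk l p x))"
proof -
  have e: "(\<Sum>p\<in>UNIV. v p * of_int (Jk l p x)) = (\<Sum>p\<in>UNIV. v p * of_int (\<Sum>y\<in>UNIV. Ltp l p y * Ltp l y x))
     - (\<Sum>p\<in>UNIV. v p * of_int (Ltp l p x))"
    by (simp add: Jk_def right_diff_distrib sum_subtractf)
  show ?thesis unfolding e LL_int by (simp only: L_int)
qed

lemma T1_int: "mprod (line_vec l) (mprod v w) x
   = (\<Sum>p\<in>UNIV. \<Sum>q\<in>UNIV. v p * w q * of_int (\<Sum>y\<in>UNIV. bpi p q y * Ltp l y x))"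
proof -
  have "mprod (line_vec l) (mprod v w) x
      = (\<Sum>y\<in>UNIV. \<Sum>p\<in>UNIV. \<Sum>q\<in>UNIV. v p * w q * (of_int (bpi p q y) * of_int (Ltp l y x)))"
    unfolding L_int unfolding mprod_int sum_distrib_right sum_distrib_left by (simp add: mult_ac)
  also have "\<dots> = (\<Sum>p\<in>UNIV. \<Sum>y\<in>UNIV. \<Sum>q\<in>UNIV. v p * w q * (of_int (bpi p q y) * of_int (Ltp l y x)))"
    by (rule sum.swap)
  also have "\<dots> = (\<Sum>p\<in>UNIV. \<Sum>q\<in>UNIV. \<Sum>y\<in>UNIV. v p * w q * (of_int (bpi p q y) * of_int (Ltp l y x)))"
    by (rule sum.cong[OF refl], rule sum.swap)
  also have "\<dots> = (\<Sum>p\<in>UNIV. \<Sum>q\<in>UNIV. v p * w q * of_int (\<Sum>y\<in>UNIV. bpi p q y * Ltp l y x))"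
    unfolding sum_distrib_left of_int_sum of_int_mult by (simp add: mult_ac)
  finally show ?thesis .
qed

lemma T2_int: "mprod v (mprod (line_vec l) w) x
   = (\<Sum>p\<in>UNIV. \<Sum>q\<in>UNIV. v p * w q * of_int (\<Sum>y\<in>UNIV. Ltp l q y * bpi p y x))"
proof -
  have "mprod v (mprod (line_vec l) w) x
      = (\<Sum>p\<in>UNIV. \<Sum>y\<in>UNIV. \<Sum>q\<in>UNIV. v p * w q * (of_int (Ltp l q y) * of_int (bpi p y x)))"
    unfolding L_int unfolding mprod_int sum_distrib_right sum_distrib_left by (simp add: mult_ac)
  also have "\<dots> = (\<Sum>p\<in>UNIV. \<Sum>q\<in>UNIV. \<Sum>y\<in>UNIV. v p * w q * (of_int (Ltp l q y) * of_int (bpi p y x)))"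
    by (rule sum.cong[OF refl], rule sum.swap)
  also have "\<dots> = (\<Sum>p\<in>UNIV. \<Sum>q\<in>UNIV. v p * w q * of_int (\<Sum>y\<in>UNIV. Ltp l q y * bpi p y x))"
    unfolding sum_distrib_left of_int_sum of_int_mult by (simp add: mult_ac)
  finally show ?thesis .
qed

lemma T3_int: "mprod (mprod (line_vec l) v) w x
   = (\<Sum>p\<in>UNIV. \<Sum>q\<in>UNIV. v p * w q * of_int (\<Sum>y\<in>UNIV. Ltp l p y * bpi y q x))"
proof -
  have "mprod (mprod (line_vec l) v) w x
      = (\<Sum>y\<in>UNIV. \<Sum>q\<in>UNIV. \<Sum>p\<in>UNIV. v p * w q * (of_int (Ltp l p y) * of_int (bpi y q x)))"
    unfolding L_int unfolding mprod_int sum_distrib_right sum_distrib_left by (simp add: mult_ac)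
  also have "\<dots> = (\<Sum>y\<in>UNIV. \<Sum>p\<in>UNIV. \<Sum>q\<in>UNIV. v p * w q * (of_int (Ltp l p y) * of_int (bpi y q x)))"
    by (rule sum.cong[OF refl], rule sum.swap)
  also have "\<dots> = (\<Sum>p\<in>UNIV. \<Sum>y\<in>UNIV. \<Sum>q\<in>UNIV. v p * w q * (of_int (Ltp l p y) * of_int (bpi y q x)))"
    by (rule sum.swap)
  also have "\<dots> = (\<Sum>p\<in>UNIV. \<Sum>q\<in>UNIV. \<Sum>y\<in>UNIV. v p * w q * (of_int (Ltp l p y) * of_int (bpi y q x)))"
    by (rule sum.cong[OF refl], rule sum.swap)
  also have "\<dots> = (\<Sum>p\<in>UNIV. \<Sum>q\<in>UNIV. v p * w q * of_int (\<Sum>y\<in>UNIV. Ltp l p y * bpi y q x))"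
    unfolding sum_distrib_left of_int_sum of_int_mult by (simp add: mult_ac)
  finally show ?thesis .
qed

lemma D_int: "mprod (line_vec l) (mprod v w) x - mprod v (mprod (line_vec l) w) x - mprod (mprod (line_vec l) v) w x
   = (\<Sum>p\<in>UNIV. \<Sum>q\<in>UNIV. v p * w q * of_int (Kk l p q x))"
  by (simp add: T1_int T2_int T3_int Kk_def algebra_simps sum_subtractf sum.distrib)



lemma three_cases: "(x::3) = 0 \<or> x = 1 \<or> x = 2"
proof (cases x)
  case (of_int z)
  then have "z = 0 \<or> z = 1 \<or> z = 2" by auto
  then show ?thesis using of_int by auto
qed

lemma three_x: "(x::3) + x + x = 0"
  using three_cases[of x] by auto

type_synonym pn = "nat \<times> nat"
definition wN :: "pn \<Rightarrow> pn \<Rightarrow> pn" where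
  "wN p q = ((6 - fst p - fst q) mod 3, (6 - snd p - snd q) mod 3)"
definition bpN :: "pn \<Rightarrow> pn \<Rightarrow> pn \<Rightarrow> int" where
  "bpN p q x = (if p \<noteq> q \<and> (x = p \<or> x = q \<or> x = wN p q) then 1 else 0)"
definition ptsN :: "pn list" where "ptsN = [(0,0),(0,1),(0,2),(1,0),(1,1),(1,2),(2,0),(2,1),(2,2)]"
definition LtN :: "pn \<Rightarrow> pn \<Rightarrow> int" where
  "LtN y x = bpN (0,0) y x + bpN (1,0) y x + bpN (2,0) y x"
definition KN :: "pn \<Rightarrow> pn \<Rightarrow> pn \<Rightarrow> int" where
  "KN p q x = (\<Sum>y\<in>set ptsN. bpN p q y * LtN y x - LtN q y * bpN p y x - LtN p y * bpN y q x)"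
definition JN :: "pn \<Rightarrow> pn \<Rightarrow> int" where
  "JN p x = (\<Sum>y\<in>set ptsN. LtN p y * LtN y x) - LtN p x"
definition CN :: "pn \<Rightarrow> pn \<Rightarrow> int" where
  "CN q x = (\<Sum>y\<in>set ptsN. bpN y q x)"

lemma chkC: "\<forall>q\<in>set ptsN. \<forall>x\<in>set ptsN. even (CN q x)" by code_simp
lemma chkJ: "\<forall>p\<in>set ptsN. \<forall>x\<in>set ptsN. even (JN p x - JN p (0,0))" by code_simp
lemma chkK: "\<forall>p\<in>set ptsN. \<forall>q\<in>set ptsN. \<forall>x\<in>set ptsN. even (KN p q x - KN p q (0,0))" by code_simp

definition phi :: "pn \<Rightarrow> point" where "phi n = (of_nat (fst n), of_nat (snd n))"

lemma mem_ptsN: "n \<in> set ptsN \<longleftrightarrow> fst n < 3 \<and> snd n < 3"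
proof (cases n)
  case (Pair a b)
  have "a < 3 \<longleftrightarrow> a = 0 \<or> a = 1 \<or> a = 2" "b < 3 \<longleftrightarrow> b = 0 \<or> b = 1 \<or> b = 2" by arith+
  then show ?thesis using Pair by (auto simp: ptsN_def)
qed

lemma UNIV_phi: "(UNIV :: point set) = phi ` set ptsN"
proof -
  have "(a, b) \<in> phi ` set ptsN" for a b :: 3
    using three_cases[of a] three_cases[of b] by (auto simp: ptsN_def phi_def)
  then show ?thesis by auto
qed

lemma inj_phi: "inj_on phi (set ptsN)"
  by (auto simp: inj_on_def ptsN_def phi_def)

lemma sumU: "sum f (UNIV :: point set) = (\<Sum>n\<in>set ptsN. f (phi n))"
  by (subst UNIV_phi) (simp add: sum.reindex[OF inj_phi])

lemma allU: "(\<forall>y::point. P y) \<longleftrightarrow> (\<forall>n\<in>set ptsN. P (phi n))"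
  by (metis UNIV_I UNIV_phi imageE image_eqI)

lemma wedge_phi: "n \<in> set ptsN \<Longrightarrow> m \<in> set ptsN \<Longrightarrow> wedge (phi n) (phi m) = phi (wN n m)"
  by (auto simp: ptsN_def phi_def wedge_def wN_def)

lemma wN_mem: "wN n m \<in> set ptsN"
  by (simp add: mem_ptsN wN_def)

lemma bpi_phi: "n \<in> set ptsN \<Longrightarrow> m \<in> set ptsN \<Longrightarrow> k \<in> set ptsN \<Longrightarrow>
   bpi (phi n) (phi m) (phi k) = bpN n m k"
  by (simp add: bpi_def bpN_def wedge_phi inj_on_eq_iff[OF inj_phi] wN_mem)

definition l0 :: "point set" where "l0 = {(0,0),(1,0),(2,0)}"

lemma Ltp_l0: "Ltp l0 y x = bpi (0,0) y x + bpi (1,0) y x + bpi (2,0) y x"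
proof -
  have "Ltp l0 y x = (\<Sum>a\<in>UNIV. if a \<in> l0 then bpi a y x else 0)"
    unfolding Ltp_def li_def by (rule sum.cong) auto
  also have "\<dots> = (\<Sum>a\<in>l0. bpi a y x)"
    by (simp add: sum.If_cases Int_def)
  also have "\<dots> = bpi (0,0) y x + bpi (1,0) y x + bpi (2,0) y x"
    by (simp add: l0_def)
  finally show ?thesis .
qed

lemma phi_consts: "((0::3),(0::3)) = phi (0,0)" "((1::3),(0::3)) = phi (1,0)" "((2::3),(0::3)) = phi (2,0)"
  by (simp_all add: phi_def)

lemma Ltp_phi: "y \<in> set ptsN \<Longrightarrow> x \<in> set ptsN \<Longrightarrow> Ltp l0 (phi y) (phi x) = LtN y x"
  unfolding Ltp_l0 LtN_def phi_consts
  by (simp add: bpi_phi ptsN_def)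

lemma K_phi: "p \<in> set ptsN \<Longrightarrow> q \<in> set ptsN \<Longrightarrow> x \<in> set ptsN \<Longrightarrow>
   Kk l0 (phi p) (phi q) (phi x) = KN p q x"
  unfolding Kk_def KN_def sumU by (rule sum.cong) (simp_all add: bpi_phi Ltp_phi)

lemma J_phi: "p \<in> set ptsN \<Longrightarrow> x \<in> set ptsN \<Longrightarrow> Jk l0 (phi p) (phi x) = JN p x"
  unfolding Jk_def JN_def sumU by (simp add: Ltp_phi)

lemma C_phi: "q \<in> set ptsN \<Longrightarrow> x \<in> set ptsN \<Longrightarrow> (\<Sum>y\<in>UNIV. bpi y (phi q) (phi x)) = CN q x"
  unfolding CN_def sumU by (rule sum.cong) (simp_all add: bpi_phi)


lemma baseC: "even (\<Sum>y\<in>UNIV. bpi y q x)"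
proof -
  have "\<forall>q x. even (\<Sum>y\<in>UNIV. bpi y q x)"
    unfolding allU using chkC by (simp add: C_phi)
  then show ?thesis by blast
qed

lemma baseJ: "even (Jk l0 p x - Jk l0 p (0,0))"
proof -
  have "\<forall>p x. even (Jk l0 p x - Jk l0 p (0,0))"
    unfolding allU phi_consts(1) using chkJ by (simp add: J_phi ptsN_def)
  then show ?thesis by blast
qed

lemma baseK: "even (Kk l0 p q x - Kk l0 p q (0,0))"
proof -
  have "\<forall>p q x. even (Kk l0 p q x - Kk l0 p q (0,0))"
    unfolding allU phi_consts(1) using chkK by (simp add: K_phi ptsN_def)
  then show ?thesis by blast
qed



lemma even_of_int: "(2::'r::comm_ring_1) = 0 \<Longrightarrow> even k \<Longrightarrow> (of_int k :: 'r) = 0"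
  by (auto elim!: evenE)

lemma const_Ann:
  fixes c :: "'r::comm_ring_1"
  assumes char2: "(2::'r) = 0"
  shows "(\<lambda>_. c) \<in> Ann"
proof -
  have "mprod (\<lambda>_. c) w x = 0" for w :: "point \<Rightarrow> 'r" and x
  proof -
    have "mprod (\<lambda>_. c) w x = (\<Sum>q\<in>UNIV. \<Sum>p\<in>UNIV. c * w q * of_int (bpi p q x))"
      unfolding mprod_int by (rule sum.swap)
    also have "\<dots> = (\<Sum>q\<in>UNIV. c * w q * of_int (\<Sum>p\<in>UNIV. bpi p q x))"
      by (simp add: sum_distrib_left)
    also have "\<dots> = 0"
      using even_of_int[OF char2 baseC] by simp
    finally show ?thesis .
  qed
  then show ?thesis unfolding Ann_def by blast
qed

lemma kernel1_Ann:
  fixes f :: "point \<Rightarrow> 'r::comm_ring_1"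
  assumes char2: "(2::'r) = 0" and ev: "\<And>p x. even (J p x - J p zb)"
  shows "(\<lambda>x. \<Sum>p\<in>UNIV. f p * of_int (J p x)) \<in> Ann"
proof (rule Ann_cong[OF const_Ann[OF char2, of "\<Sum>p\<in>UNIV. f p * of_int (J p zb)"]])
  fix x
  have "(of_int (J p x) :: 'r) = of_int (J p zb)" for p
    using even_of_int[OF char2 ev[of p x]] by simp
  then show "(\<Sum>p\<in>UNIV. f p * of_int (J p x)) = (\<Sum>p\<in>UNIV. f p * of_int (J p zb))" by simp
qed

lemma kernel2_Ann:
  fixes f :: "point \<Rightarrow> point \<Rightarrow> 'r::comm_ring_1"
  assumes char2: "(2::'r) = 0" and ev: "\<And>p q x. even (K p q x - K p q zb)"
  shows "(\<lambda>x. \<Sum>p\<in>UNIV. \<Sum>q\<in>UNIV. f p q * of_int (K p q x)) \<in> Ann"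
proof (rule Ann_cong[OF const_Ann[OF char2, of "\<Sum>p\<in>UNIV. \<Sum>q\<in>UNIV. f p q * of_int (K p q zb)"]])
  fix x
  have "(of_int (K p q x) :: 'r) = of_int (K p q zb)" for p q
    using even_of_int[OF char2 ev[of p q x]] by simp
  then show "(\<Sum>p\<in>UNIV. \<Sum>q\<in>UNIV. f p q * of_int (K p q x)) = (\<Sum>p\<in>UNIV. \<Sum>q\<in>UNIV. f p q * of_int (K p q zb))" by simp
qed

definition autm :: "(point \<Rightarrow> point) \<Rightarrow> bool" where
  "autm g = (bij g \<and> (\<forall>p q. wedge (g p) (g q) = g (wedge p q)))"

lemma bpi_aut: "autm g \<Longrightarrow> bpi (g p) (g q) (g x) = bpi p q x"
proof -
  assume a: "autm g"
  then have i: "inj g" by (simp add: autm_def bij_def)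
  have w: "wedge (g p) (g q) = g (wedge p q)" using a unfolding autm_def by blast
  show ?thesis by (simp add: bpi_def w inj_eq[OF i])
qed

lemma wlin: "- ((t::3) + a1*d + a2*e + (t + b1*d + b2*e)) = t + (-(a1+b1))*d + (-(a2+b2))*e"
proof -
  have "- (t + a1*d + a2*e + (t + b1*d + b2*e)) - (t + (-(a1+b1))*d + (-(a2+b2))*e) = -(t+t+t)"
    by (simp add: algebra_simps)
  then show ?thesis by (simp only: three_x minus_zero right_minus_eq)
qed

lemma li_aut: "autm g \<Longrightarrow> li (g ` l) (g a) = li l a"
  by (simp add: li_def autm_def bij_def inj_image_mem_iff)

lemma sum_aut: "autm g \<Longrightarrow> (\<Sum>a\<in>UNIV. f a) = (\<Sum>a\<in>UNIV. f (g a))"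
  unfolding autm_def by (metis sum.reindex_bij_betw)

lemma Ltp_aut: "autm g \<Longrightarrow> Ltp (g ` l) (g y) (g x) = Ltp l y x"
  unfolding Ltp_def by (subst sum_aut[of g]) (simp_all add: li_aut bpi_aut)

lemma Kk_aut: "autm g \<Longrightarrow> Kk (g ` l) (g p) (g q) (g x) = Kk l p q x"
  unfolding Kk_def by (subst sum_aut[of g]) (simp_all add: Ltp_aut bpi_aut)

lemma Jk_aut: "autm g \<Longrightarrow> Jk (g ` l) (g p) (g x) = Jk l p x"
  unfolding Jk_def by (subst sum_aut[of g]) (simp_all add: Ltp_aut)

lemma lin_key:
  fixes z1 z2 d1 d2 :: 3
  assumes "(d1, d2) \<noteq> (0, 0)"
    and "z1 * d1 + z2 * (if d1 = 0 then 1 else 0) = 0"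
    and "z1 * d2 + z2 * (if d1 = 0 then 0 else 1) = 0"
  shows "z1 = 0 \<and> z2 = 0"
  using assms three_cases[of z1] three_cases[of z2] three_cases[of d1] three_cases[of d2]
  by auto

lemma line_aut:
  assumes pq: "p \<noteq> q"
  shows "\<exists>g. autm g \<and> {p, q, wedge p q} = g ` l0"
proof -
  obtain p1 p2 where p: "p = (p1, p2)" by (cases p)
  obtain q1 q2 where q: "q = (q1, q2)" by (cases q)
  define d1 where "d1 = q1 - p1"
  define d2 where "d2 = q2 - p2"
  define e1 :: 3 where "e1 = (if d1 = 0 then 1 else 0)"
  define e2 :: 3 where "e2 = (if d1 = 0 then 0 else 1)"
  define g where "g = (\<lambda>x::point. (p1 + fst x * d1 + snd x * e1, p2 + fst x * d2 + snd x * e2))"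
  have d0: "(d1, d2) \<noteq> (0, 0)" using pq p q by (auto simp: d1_def d2_def)
  have inj: "inj g"
  proof (rule injI)
    fix a b assume "g a = g b"
    then have h1: "(fst a - fst b) * d1 + (snd a - snd b) * e1 = 0"
      and h2: "(fst a - fst b) * d2 + (snd a - snd b) * e2 = 0"
      by (simp_all add: g_def algebra_simps)
    have "fst a - fst b = 0 \<and> snd a - snd b = 0"
      by (rule lin_key[OF d0]) (use h1 h2 in \<open>simp_all add: e1_def e2_def\<close>)
    then show "a = b" by (simp add: prod_eq_iff)
  qed
  have bij: "bij g" using inj finite_UNIV_inj_surj[of g] by (simp add: bij_def)
  have wg: "wedge (g a) (g b) = g (wedge a b)" for a b
    by (simp only: g_def wedge_def fst_conv snd_conv wlin)
  have "g ` l0 = {g (0,0), g (1,0), g (2,0)}" by (simp add: l0_def)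
  also have "\<dots> = {p, q, wedge p q}"
  proof -
    have "g (0,0) = p" by (simp add: g_def p)
    moreover have "g (1,0) = q" by (simp add: g_def p q d1_def d2_def)
    moreover have "g (2,0) = wedge p q"
    proof -
      have "p1 + 2 * (q1 - p1) = - (p1 + q1)" "p2 + 2 * (q2 - p2) = - (p2 + q2)"
        using three_cases[of p1] three_cases[of q1] three_cases[of p2] three_cases[of q2] by auto
      then show ?thesis by (simp add: g_def p q d1_def d2_def wedge_def)
    qed
    ultimately show ?thesis by simp
  qed
  finally show ?thesis using bij wg by (auto simp: autm_def)
qed

lemma line_even:
  assumes l: "l \<in> lines"
  shows "even (Jk l p x - Jk l p (0,0))" and "even (Kk l p q x - Kk l p q (0,0))"
proof -
  obtain a b where ab: "a \<noteq> b" "l = {a, b, wedge a b}" using l by (auto simp: lines_def)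
  obtain g where g: "autm g" "l = g ` l0" using line_aut[OF ab(1)] ab(2) by auto
  have surj: "surj g" using g(1) by (simp add: autm_def bij_def)
  obtain p' where p': "p = g p'" using surj by (metis surjD)
  obtain q' where q': "q = g q'" using surj by (metis surjD)
  obtain x' where x': "x = g x'" using surj by (metis surjD)
  obtain z where z: "(0,0) = g z" using surj by (metis surjD)
  have "Jk l p x - Jk l p (0,0) = (Jk l0 p' x' - Jk l0 p' (0,0)) - (Jk l0 p' z - Jk l0 p' (0,0))"
    unfolding g(2) p' x' z Jk_aut[OF g(1)] by simp
  then show "even (Jk l p x - Jk l p (0,0))" by (simp only:) (rule dvd_diff[OF baseJ baseJ])
  have "Kk l p q x - Kk l p q (0,0) = (Kk l0 p' q' x' - Kk l0 p' q' (0,0)) - (Kk l0 p' q' z - Kk l0 p' q' (0,0))"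
    unfolding g(2) p' q' x' z Kk_aut[OF g(1)] by simp
  then show "even (Kk l p q x - Kk l p q (0,0))" by (simp only:) (rule dvd_diff[OF baseK baseK])
qed

theorem corollary5p18:
  fixes dummy :: "'r::comm_ring_1"
  assumes char2: "(2::'r) = 0"
    and l: "l \<in> lines"
  shows "(\<forall>v :: point \<Rightarrow> 'r. \<exists>v0 v1. v0 \<in> qeig l 0 \<and> v1 \<in> qeig l 1 \<and> (\<lambda>x. v x - (v0 x + v1 x)) \<in> Ann)
       \<and> (\<forall>v :: point \<Rightarrow> 'r. v \<in> qeig l 0 \<and> v \<in> qeig l 1 \<longrightarrow> v \<in> Ann)
       \<and> (\<forall>v w :: point \<Rightarrow> 'r. v \<in> qeig l 0 \<and> w \<in> qeig l 0 \<longrightarrow> mprod v w \<in> qeig l 0)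
       \<and> (\<forall>v w :: point \<Rightarrow> 'r. v \<in> qeig l 0 \<and> w \<in> qeig l 1 \<longrightarrow> mprod v w \<in> qeig l 1)
       \<and> (\<forall>v w :: point \<Rightarrow> 'r. v \<in> qeig l 1 \<and> w \<in> qeig l 1 \<longrightarrow> mprod v w \<in> qeig l 0)"
proof (rule abstract_main[OF char2])
  fix v w :: "point \<Rightarrow> 'r"
  show "(\<lambda>x. mprod (line_vec l) (mprod (line_vec l) v) x - mprod (line_vec l) v x) \<in> Ann"
    unfolding J_int by (rule kernel1_Ann[where J="Jk l" and zb="(0,0)", OF char2 line_even(1)[OF l]])
  show "(\<lambda>x. mprod (line_vec l) (mprod v w) x - mprod v (mprod (line_vec l) w) x
               - mprod (mprod (line_vec l) v) w x) \<in> Ann"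
    unfolding D_int by (rule kernel2_Ann[where K="Kk l" and zb="(0,0)", OF char2 line_even(2)[OF l]])
qed

end
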